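(* Fix $c\in\mathbb{C}$, let $f_c(z)=z^2+c$, and for $q\in(0,1]$ let $z_q(0)=0$ and $$z_q(n)=\frac{1}{\Gamma(q)}\sum_{i=1}^{n}\frac{\Gamma(n-i+q)}{\Gamma(n-i+1)}\,f_c\big(z_q(i-1)\big),\qquad n\ge1.$$ As $q\uparrow 1$ this fractional-order Mandelbrot map becomes $z(n)=\sum_{i=1}^{n}f_c(z(i-1))$, $z(0)=0$. The set of parameters $c\in\mathbb{C}$ for which this sequence $(z(n))_{n\ge0}$ is bounded differs from the classical Mandelbrot set $\{c\in\mathbb{C}:(f_c^{\,n}(0))_{n\ge1}\text{ bounded}\}$.
   Context: The recursion is the numerical solution of the Caputo-like fractional difference initial value problem $\Delta^q z(t)=f_c(z(t+q-1))$, $t\in\mathbb{N}_{1-q}$, $z(0)=0$, of order $q$; the set of $c$ for which it stays bounded is the fractional-order Mandelbrot set. $\Gamma$ is Euler's Gamma function. *)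

theory Defs
  imports "HOL-Analysis.Analysis"
begin

definition fc :: "complex \<Rightarrow> complex \<Rightarrow> complex" where
  "fc c z = z\<^sup>2 + c"

fun zfrac :: "real \<Rightarrow> complex \<Rightarrow> nat \<Rightarrow> complex" where
  "zfrac q c 0 = 0"
| "zfrac q c (Suc n) =
     of_real (1 / Gamma q) *
     (\<Sum>i\<in>{1..Suc n}. of_real (Gamma (real (Suc n - i) + q) / Gamma (real (Suc n - i) + 1))
                        * fc c (zfrac q c (i - 1)))"

fun zone :: "complex \<Rightarrow> nat \<Rightarrow> complex" where
  "zone c 0 = 0"
| "zone c (Suc n) = (\<Sum>i\<in>{1..Suc n}. fc c (zone c (i - 1)))"

definition mandelbrot :: "complex set" where
  "mandelbrot = {c. bounded ((\<lambda>n. ((fc c) ^^ n) 0) ` {1..})}"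

end

theory Submission
  imports Defs
begin

lemma gam_lim:
  fixes k :: real assumes "k \<ge> 0"
  shows "((\<lambda>q. Gamma (k + q) / Gamma (k + 1)) \<longlongrightarrow> 1) (at_left 1)"
proof -
  have nz: "k + 1 \<notin> \<int>\<^sub>\<le>\<^sub>0" using assms
    by (metis add_nonneg_pos nonpos_Ints_nonpos not_less zero_less_one)
  have gnz: "Gamma (k+1) \<noteq> 0" proof -
    have "k + 1 > 0" using assms by simp
    from Gamma_real_pos[OF this] show ?thesis by simp
  qed
  moreover have "((\<lambda>q. Gamma (k + q) / Gamma (k + 1)) \<longlongrightarrow> Gamma (k+1) / Gamma (k + 1)) (at_left 1)"
    using gnz by (intro tendsto_intros nz) auto
  ultimately show ?thesis by simp
qed

lemma part1: "((\<lambda>q. zfrac q c n) \<longlongrightarrow> zone c n) (at_left 1)"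
proof (induction n rule: less_induct)
  case (less n)
  show ?case
  proof (cases n)
    case 0 then show ?thesis by simp
  next
    case (Suc m)
    have IH: "\<And>i. i \<in> {1..Suc m} \<Longrightarrow> ((\<lambda>q. fc c (zfrac q c (i - 1))) \<longlongrightarrow> fc c (zone c (i - 1))) (at_left 1)"
    proof -
      fix i assume "i \<in> {1..Suc m}"
      then have "i - 1 < n" using Suc by auto
      from less[OF this] show "((\<lambda>q. fc c (zfrac q c (i - 1))) \<longlongrightarrow> fc c (zone c (i - 1))) (at_left 1)"
        unfolding fc_def by (intro tendsto_intros)
    qed
    have "((\<lambda>q. of_real (1 / Gamma q) *
     (\<Sum>i\<in>{1..Suc m}. of_real (Gamma (real (Suc m - i) + q) / Gamma (real (Suc m - i) + 1))
                        * fc c (zfrac q c (i - 1)))) \<longlongrightarrow>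
      of_real (1 / Gamma 1) * (\<Sum>i\<in>{1..Suc m}. of_real 1 * fc c (zone c (i - 1)))) (at_left 1)"
      by (intro tendsto_intros IH gam_lim) auto
    then show ?thesis using Suc by simp
  qed
qed

lemma zone_Suc: "zone c (Suc n) = zone c n + fc c (zone c n)"
  by (cases n) auto

lemma zone_real: "\<exists>x. zone (1/4) n = of_real x \<and> x \<ge> real n / 4"
proof (induction n)
  case 0 then show ?case by simp
next
  case (Suc n)
  then obtain x where x: "zone (1/4) n = of_real x" "x \<ge> real n / 4" by blast
  have "zone (1/4) (Suc n) = of_real (x + x^2 + 1/4)"
    unfolding zone_Suc x(1) fc_def by simp
  moreover have "x + x^2 + 1/4 \<ge> real (Suc n) / 4" using x(2)
    by (smt (verit) of_nat_Suc zero_le_power2 add_divide_distrib)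
  ultimately show ?case by blast
qed

lemma not_bdd: "\<not> bounded (range (zone (1/4)))"
proof
  assume "bounded (range (zone (1/4)))"
  then obtain B where B: "\<And>n. norm (zone (1/4) n) \<le> B"
    by (auto simp: bounded_iff)
  obtain n :: nat where n: "real n > 4 * B" using reals_Archimedean2 by blast
  obtain x where x: "zone (1/4) n = of_real x" "x \<ge> real n / 4" using zone_real by blast
  have "norm (zone (1/4) n) = \<bar>x\<bar>" using x by simp
  with B[of n] x n show False by linarith
qed

lemma in_mb: "(1/4 :: complex) \<in> mandelbrot"
proof -
  have "norm (((fc (1/4)) ^^ n) 0) \<le> 1/2" for n
  proof (induction n)
    case 0 then show ?case by simp
  next
    case (Suc n)
    let ?z = "((fc (1/4)) ^^ n) 0"
    have "norm (fc (1/4) ?z) \<le> norm ?z ^ 2 + norm (1/4::complex)"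
      unfolding fc_def by (metis norm_triangle_ineq norm_power)
    also have "\<dots> \<le> (1/2)^2 + 1/4"
      using Suc by (intro add_mono power_mono) auto
    finally show ?case by (simp add: power2_eq_square)
  qed
  then show ?thesis unfolding mandelbrot_def bounded_iff by blast
qed

theorem proposition3:
  shows "(\<forall>c n. ((\<lambda>q. zfrac q c n) \<longlongrightarrow> zone c n) (at_left 1))
         \<and> {c. bounded (range (zone c))} \<noteq> mandelbrot"
  using part1 not_bdd in_mb by blast

end
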